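(* Let $\alpha>1/2$, $c_0>0$, $\delta_n=n^{-\alpha/(2\alpha+1)}$, suppose $p\le Cn\delta_n^2$ for some $C>0$, let $\theta_{*,p}\in\mathbb R^p$ with $\|\theta_{*,p}\|_\alpha\le c_0$, let $\Pi=N(0,n^{-1/(2\alpha+1)}\Sigma_\alpha^{-1})$ on $\mathbb R^p$ and $\mathcal B_{n,r}=\{\theta\in\mathbb R^p:\|\theta-\theta_{*,p}\|\le\delta_n,\|\theta\|_\alpha\le r\}$. Then for any sufficiently large $r\ge\max(4,2c_0)$ there is a constant $c\equiv c(C,\alpha,c_0,r)>0$ such that $\Pi(\mathcal B_{n,r})\ge e^{-cn\delta_n^2}$.
   Context: $\|\cdot\|$ is the Euclidean norm on $\mathbb R^p$, $\|\theta\|_\alpha^2=\sum_{k=1}^pk^{2\alpha}\theta_k^2$, $\Sigma_\alpha=\mathrm{diag}(1,2^{2\alpha},\dots,p^{2\alpha})$. *)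

theory Defs
  imports "HOL-Probability.Probability"
begin

text \<open>Vectors in R^p are represented as functions nat => real, with coordinates indexed by 1..p.\<close>

definition rate :: "real \<Rightarrow> nat \<Rightarrow> real" where
  "rate \<alpha> n = real n powr (- \<alpha> / (2 * \<alpha> + 1))"

definition enorm_p :: "nat \<Rightarrow> (nat \<Rightarrow> real) \<Rightarrow> real" where
  "enorm_p p \<theta> = sqrt (\<Sum>k=1..p. (\<theta> k)\<^sup>2)"

definition anorm_p :: "real \<Rightarrow> nat \<Rightarrow> (nat \<Rightarrow> real) \<Rightarrow> real" where
  "anorm_p \<alpha> p \<theta> = sqrt (\<Sum>k=1..p. real k powr (2 * \<alpha>) * (\<theta> k)\<^sup>2)"

text \<open>The Gaussian prior N(0, n^(-1/(2 alpha+1)) Sigma_alpha^(-1)) on R^p: the covariance is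
  diagonal with variance n^(-1/(2 alpha+1)) k^(-2 alpha) in coordinate k, so the measure is
  the product of the corresponding one-dimensional normal laws (normal_density takes the
  standard deviation).\<close>
definition prior :: "real \<Rightarrow> nat \<Rightarrow> nat \<Rightarrow> (nat \<Rightarrow> real) measure" where
  "prior \<alpha> n p = PiM {1..p} (\<lambda>k. density lborel
      (normal_density 0 (sqrt (real n powr (- 1 / (2 * \<alpha> + 1)) * real k powr (- 2 * \<alpha>)))))"

definition ballB :: "real \<Rightarrow> nat \<Rightarrow> nat \<Rightarrow> (nat \<Rightarrow> real) \<Rightarrow> real \<Rightarrow> (nat \<Rightarrow> real) set" where
  "ballB \<alpha> n p \<theta>s r = {\<theta> \<in> space (prior \<alpha> n p).
      enorm_p p (\<lambda>k. \<theta> k - \<theta>s k) \<le> rate \<alpha> n \<and> anorm_p \<alpha> p \<theta> \<le> r}"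

end

theory Submission
  imports Defs
begin

lemma box_measure:
  fixes \<sigma> a :: "nat \<Rightarrow> real" and \<epsilon> :: real
  assumes "\<And>k. k \<in> {1..p} \<Longrightarrow> \<sigma> k > 0"
  shows "emeasure (PiM {1..p} (\<lambda>k. density lborel (normal_density 0 (\<sigma> k)))) (PiE {1..p} (\<lambda>k. {a k - \<epsilon> .. a k + \<epsilon>}))
     = (\<Prod>k\<in>{1..p}. emeasure (density lborel (normal_density 0 (\<sigma> k))) {a k - \<epsilon> .. a k + \<epsilon>})"
proof -
  have "prod_emb {1..p} (\<lambda>k. density lborel (normal_density 0 (\<sigma> k))) {1..p} (PiE {1..p} (\<lambda>k. {a k - \<epsilon> .. a k + \<epsilon>}))
     = PiE {1..p} (\<lambda>k. {a k - \<epsilon> .. a k + \<epsilon>})"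
    by (rule prod_emb_id) auto
  moreover have "emeasure (PiM {1..p} (\<lambda>k. density lborel (normal_density 0 (\<sigma> k))))
     (prod_emb {1..p} (\<lambda>k. density lborel (normal_density 0 (\<sigma> k))) {1..p} (PiE {1..p} (\<lambda>k. {a k - \<epsilon> .. a k + \<epsilon>})))
     = (\<Prod>k\<in>{1..p}. emeasure (density lborel (normal_density 0 (\<sigma> k))) {a k - \<epsilon> .. a k + \<epsilon>})"
    apply (rule emeasure_PiM_emb)
       apply (rule prob_space_normal_density)
    using assms by auto
  ultimately show ?thesis by simp
qed

lemma sq_bound:
  fixes x a \<epsilon> :: real
  assumes "\<bar>x\<bar> \<le> \<bar>a\<bar> + \<epsilon>" "\<epsilon> \<ge> 0"
  shows "x\<^sup>2 \<le> 2 * (a\<^sup>2 + \<epsilon>\<^sup>2)"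
proof -
  define b where "b = \<bar>a\<bar>"
  have b0: "b \<ge> 0" and ab: "a\<^sup>2 = b\<^sup>2" by (simp_all add: b_def)
  have "x\<^sup>2 \<le> (b + \<epsilon>)\<^sup>2" using assms unfolding b_def
    by (metis abs_ge_zero abs_le_square_iff abs_of_nonneg order_trans)
  moreover have "(b + \<epsilon>)\<^sup>2 + (b - \<epsilon>)\<^sup>2 = 2 * (b\<^sup>2 + \<epsilon>\<^sup>2)"
    by (simp add: power2_eq_square algebra_simps)
  moreover have "(b - \<epsilon>)\<^sup>2 \<ge> 0" by simp
  ultimately show ?thesis unfolding ab by linarith
qed

lemma factor_lb:
  fixes \<sigma> a \<epsilon> :: real
  assumes "\<sigma> > 0" "\<epsilon> \<ge> 0"
  shows "ennreal (2 * \<epsilon> / sqrt (2 * pi * \<sigma>\<^sup>2) * exp (- (a\<^sup>2 + \<epsilon>\<^sup>2) / \<sigma>\<^sup>2))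
     \<le> emeasure (density lborel (normal_density 0 \<sigma>)) {a - \<epsilon> .. a + \<epsilon>}"
proof -
  define L where "L = 1 / sqrt (2 * pi * \<sigma>\<^sup>2) * exp (- (a\<^sup>2 + \<epsilon>\<^sup>2) / \<sigma>\<^sup>2)"
  have L0: "L \<ge> 0" unfolding L_def by simp
  have pt: "L \<le> normal_density 0 \<sigma> x" if "x \<in> {a - \<epsilon> .. a + \<epsilon>}" for x
  proof -
    have "\<bar>x\<bar> \<le> \<bar>a\<bar> + \<epsilon>" using that by auto
    hence "x\<^sup>2 \<le> 2 * (a\<^sup>2 + \<epsilon>\<^sup>2)" using assms(2) by (rule sq_bound)
    hence "x\<^sup>2 / 2 \<le> a\<^sup>2 + \<epsilon>\<^sup>2" by simp
    hence "(x\<^sup>2 / 2) / \<sigma>\<^sup>2 \<le> (a\<^sup>2 + \<epsilon>\<^sup>2) / \<sigma>\<^sup>2"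
      by (rule divide_right_mono) simp
    moreover have "(x\<^sup>2 / 2) / \<sigma>\<^sup>2 = (x - 0)\<^sup>2/ (2 * \<sigma>\<^sup>2)" by simp
    ultimately have "- ((a\<^sup>2 + \<epsilon>\<^sup>2) / \<sigma>\<^sup>2) \<le> -((x - 0)\<^sup>2/ (2 * \<sigma>\<^sup>2))"
      by linarith
    moreover have "- (a\<^sup>2 + \<epsilon>\<^sup>2) / \<sigma>\<^sup>2 = - ((a\<^sup>2 + \<epsilon>\<^sup>2) / \<sigma>\<^sup>2)" by (rule minus_divide_left[symmetric])
    moreover have "-(x - 0)\<^sup>2/ (2 * \<sigma>\<^sup>2) = -((x - 0)\<^sup>2/ (2 * \<sigma>\<^sup>2))" by simp
    ultimately have "- (a\<^sup>2 + \<epsilon>\<^sup>2) / \<sigma>\<^sup>2 \<le> -(x - 0)\<^sup>2/ (2 * \<sigma>\<^sup>2)"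
      by metis
    hence e: "exp (- (a\<^sup>2 + \<epsilon>\<^sup>2) / \<sigma>\<^sup>2) \<le> exp (-(x - 0)\<^sup>2/ (2 * \<sigma>\<^sup>2))" by simp
    show ?thesis unfolding L_def normal_density_def by (intro mult_left_mono e) simp
  qed
  have "emeasure (density lborel (normal_density 0 \<sigma>)) {a - \<epsilon> .. a + \<epsilon>}
      = (\<integral>\<^sup>+ x. ennreal (normal_density 0 \<sigma> x) * indicator {a - \<epsilon> .. a + \<epsilon>} x \<partial>lborel)"
    by (simp add: emeasure_density)
  also have "\<dots> \<ge> (\<integral>\<^sup>+ x. ennreal L * indicator {a - \<epsilon> .. a + \<epsilon>} x \<partial>lborel)"
    by (intro nn_integral_mono) (auto simp: indicator_def pt)
  moreover have "(\<integral>\<^sup>+ x. ennreal L * indicator {a - \<epsilon> .. a + \<epsilon>} x \<partial>lborel) = ennreal (L * (2 * \<epsilon>))"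
    using assms L0 by (simp add: nn_integral_cmult_indicator ennreal_mult)
  moreover have "L * (2 * \<epsilon>) = 2 * \<epsilon> / sqrt (2 * pi * \<sigma>\<^sup>2) * exp (- (a\<^sup>2 + \<epsilon>\<^sup>2) / \<sigma>\<^sup>2)"
    unfolding L_def by simp
  ultimately show ?thesis by simp
qed

lemma ballB_meas: "ballB \<alpha> n p \<theta>s r \<in> sets (prior \<alpha> n p)"
  unfolding ballB_def enorm_p_def anorm_p_def prior_def
  by measurable

lemma ln_fact_lb: "(\<Sum>k=1..Suc p. ln (real k)) \<ge> real (Suc p) * ln (real (Suc p)) - real (Suc p)"
proof (induction p)
  case 0 then show ?case by simp
next
  case (Suc p)
  have "real (Suc p) * ln (real (Suc (Suc p))) - real (Suc p) * ln (real (Suc p)) \<le> 1"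
  proof -
    have "ln (real (Suc (Suc p))) - ln (real (Suc p)) = ln (real (Suc (Suc p)) / real (Suc p))"
      by (simp add: ln_div)
    also have "real (Suc (Suc p)) / real (Suc p) = 1 + 1 / real (Suc p)"
      by (simp add: field_simps)
    also have "ln (1 + 1 / real (Suc p)) \<le> 1 / real (Suc p)" by (rule ln_add_one_self_le_self) simp
    finally have "real (Suc p) * (ln (real (Suc (Suc p))) - ln (real (Suc p))) \<le> 1"
      by (simp add: field_simps)
    thus ?thesis by (simp add: algebra_simps)
  qed
  then show ?case using Suc.IH by (simp add: algebra_simps)
qed

lemma ln_fact_lb': "p \<ge> 1 \<Longrightarrow> (\<Sum>k=1..p. ln (real k)) \<ge> real p * ln (real p) - real p"
  using ln_fact_lb[of "p - 1"] by simp

lemma ln_half_bound: "ln (2 / sqrt (2 * pi)) \<ge> -1"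
proof -
  have "sqrt (2 * pi) \<le> sqrt 16" using pi_less_4 by (intro real_sqrt_le_mono) simp
  hence s4: "sqrt (2 * pi) \<le> 4" by simp
  have sp: "sqrt (2 * pi) > 0" by simp
  have "1 / 2 \<le> 2 / sqrt (2 * pi)" using s4 sp by (simp add: field_simps)
  hence "ln (1/2) \<le> ln (2 / sqrt (2 * pi))" using sp by (subst ln_le_cancel_iff) auto
  moreover have "ln (1/2::real) = - ln 2" by (simp add: ln_div)
  moreover have "ln (2::real) < 1" by (rule ln_2_less_1)
  ultimately show ?thesis by linarith
qed

lemma key_main:
  fixes \<alpha> c\<^sub>0 C r :: real and n p :: nat and \<theta>s :: "nat \<Rightarrow> real"
  assumes \<alpha>: "\<alpha> > 1/2" and c0: "c\<^sub>0 > 0" and C: "C > 0"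
    and r: "r \<ge> 4 + 2 * c\<^sub>0 + 2 * C powr \<alpha>" and n: "n \<ge> 1" and p: "p \<ge> 1"
    and pC: "real p \<le> C * real n * (rate \<alpha> n)\<^sup>2" and th: "anorm_p \<alpha> p \<theta>s \<le> c\<^sub>0"
  shows "measure (prior \<alpha> n p) (ballB \<alpha> n p \<theta>s r)
     \<ge> exp (- (C + \<alpha> + \<alpha> * C + c\<^sub>0\<^sup>2 + C powr (2 * \<alpha>)) * real n * (rate \<alpha> n)\<^sup>2)"
proof -
  define m where "m = real n powr (1 / (2 * \<alpha> + 1))"
  define \<delta> where "\<delta> = rate \<alpha> n"
  define P where "P = real p"
  have a0: "2 * \<alpha> + 1 > 0" using \<alpha> by simp
  have P1: "P \<ge> 1" using p by (simp add: P_def)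
  have m0: "m > 0" using n by (simp add: m_def)
  have n_eq: "real n = m powr (2 * \<alpha> + 1)"
    unfolding m_def using n a0 by (simp add: powr_powr)
  have "m powr (- \<alpha>) = real n powr (1 / (2 * \<alpha> + 1) * (- \<alpha>))"
    unfolding m_def by (simp add: powr_powr)
  also have "1 / (2 * \<alpha> + 1) * (- \<alpha>) = - \<alpha> / (2 * \<alpha> + 1)" by simp
  finally have \<delta>_eq: "\<delta> = m powr (- \<alpha>)" unfolding \<delta>_def rate_def by simp
  have \<delta>0: "\<delta> > 0" using m0 by (simp add: \<delta>_eq)
  have \<delta>2: "\<delta>\<^sup>2 = m powr (- 2 * \<alpha>)"
    unfolding \<delta>_eq power2_eq_square by (simp add: powr_add[symmetric])
  have n\<delta>: "real n * \<delta>\<^sup>2 = m"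
    unfolding n_eq \<delta>2 using m0 by (simp add: powr_add[symmetric])
  have pm: "P \<le> C * m" using pC n\<delta> unfolding \<delta>_def P_def by (simp add: mult.assoc)
  have Pm: "P / m \<le> C" using pm m0 by (simp add: field_simps)
  have mP: "m powr (- 2 * \<alpha>) * P powr (2 * \<alpha>) = (P / m) powr (2 * \<alpha>)"
  proof -
    have "- 2 * \<alpha> = - (2 * \<alpha>)" by simp
    hence "m powr (- 2 * \<alpha>) = 1 / m powr (2 * \<alpha>)" by (simp add: powr_minus_divide)
    thus ?thesis using m0 P1 by (simp add: powr_divide)
  qed
  define \<epsilon> where "\<epsilon> = \<delta> / sqrt P"
  have \<epsilon>0: "\<epsilon> > 0" using \<delta>0 P1 by (simp add: \<epsilon>_def)
  have \<epsilon>2: "\<epsilon>\<^sup>2 = m powr (- 2 * \<alpha>) / P"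
    unfolding \<epsilon>_def using P1 by (simp add: power_divide \<delta>2)
  have ln\<epsilon>: "ln \<epsilon> = - \<alpha> * ln m - ln P / 2"
    unfolding \<epsilon>_def using \<delta>0 P1 m0 by (simp add: ln_div ln_sqrt \<delta>_eq)
  define \<sigma> where "\<sigma> = (\<lambda>k::nat. sqrt (real n powr (- 1 / (2 * \<alpha> + 1)) * real k powr (- 2 * \<alpha>)))"
  have prior_eq: "prior \<alpha> n p = PiM {1..p} (\<lambda>k. density lborel (normal_density 0 (\<sigma> k)))"
    unfolding prior_def \<sigma>_def by simp
  have nm: "real n powr (- 1 / (2 * \<alpha> + 1)) = 1 / m"
  proof -
    have "- 1 / (2 * \<alpha> + 1) = - (1 / (2 * \<alpha> + 1))" by simp
    thus ?thesis unfolding m_def by (simp add: powr_minus divide_inverse)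
  qed
  have \<sigma>_eq: "\<sigma> k = 1 / (sqrt m * real k powr \<alpha>)" if "k \<ge> 1" for k
  proof -
    have k0: "real k > 0" using that by simp
    have e1: "real k powr (2 * \<alpha>) = real k powr \<alpha> * real k powr \<alpha>"
      by (simp add: powr_add[symmetric])
    have e2: "real k powr (- 2 * \<alpha>) = inverse (real k powr (2 * \<alpha>))"
      by (subst powr_minus[symmetric]) simp
    have "real k powr (- 2 * \<alpha>) = (1 / real k powr \<alpha>)\<^sup>2"
      unfolding e2 e1 using k0 by (simp add: power2_eq_square field_simps)
    hence "\<sigma> k = sqrt (1 / m * (1 / real k powr \<alpha>)\<^sup>2)" unfolding \<sigma>_def nm by simp
    also have "\<dots> = sqrt (1 / m) * sqrt ((1 / real k powr \<alpha>)\<^sup>2)" by (rule real_sqrt_mult)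
    also have "\<dots> = sqrt (1 / m) * (1 / real k powr \<alpha>)" using k0 by simp
    also have "\<dots> = 1 / (sqrt m * real k powr \<alpha>)" by (simp add: real_sqrt_divide)
    finally show ?thesis .
  qed
  have \<sigma>0: "\<sigma> k > 0" if "k \<ge> 1" for k
    using \<sigma>_eq[OF that] that m0 by simp
  define L where "L = (\<lambda>k::nat. 2 * \<epsilon> / sqrt (2 * pi * (\<sigma> k)\<^sup>2) * exp (- ((\<theta>s k)\<^sup>2 + \<epsilon>\<^sup>2) / (\<sigma> k)\<^sup>2))"
  have L_eq: "L k = (2 / sqrt (2 * pi)) * (\<epsilon> * (sqrt m * real k powr \<alpha>))
      * exp (- (m * real k powr (2 * \<alpha>) * ((\<theta>s k)\<^sup>2 + \<epsilon>\<^sup>2)))" if "k \<ge> 1" for k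
  proof -
    have k0: "real k > 0" using that by simp
    define s where "s = sqrt m * real k powr \<alpha>"
    have s0: "s > 0" using k0 m0 by (simp add: s_def)
    have e1: "real k powr (2 * \<alpha>) = real k powr \<alpha> * real k powr \<alpha>"
      by (simp add: powr_add[symmetric])
    have "s\<^sup>2 = (sqrt m)\<^sup>2 * (real k powr \<alpha>)\<^sup>2" by (simp add: s_def power_mult_distrib)
    also have "\<dots> = m * real k powr (2 * \<alpha>)" using m0 unfolding e1 by (simp add: power2_eq_square)
    finally have ss: "s\<^sup>2 = m * real k powr (2 * \<alpha>)" .
    have sq: "sqrt (2 * pi * (\<sigma> k)\<^sup>2) = sqrt (2 * pi) * (1 / s)"
      using \<sigma>_eq[OF that] s0 by (simp add: real_sqrt_mult s_def)
    have \<sigma>s: "\<sigma> k = 1 / s" using \<sigma>_eq[OF that] by (simp add: s_def)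
    have ex: "- ((\<theta>s k)\<^sup>2 + \<epsilon>\<^sup>2) / (\<sigma> k)\<^sup>2 = - (((\<theta>s k)\<^sup>2 + \<epsilon>\<^sup>2) * s\<^sup>2)"
      unfolding \<sigma>s using s0 by (simp add: power_divide algebra_simps)
    have "L k = 2 * \<epsilon> / (sqrt (2 * pi) * (1 / s)) * exp (- (((\<theta>s k)\<^sup>2 + \<epsilon>\<^sup>2) * s\<^sup>2))"
      unfolding L_def sq ex by simp
    also have "\<dots> = (2 / sqrt (2 * pi)) * (\<epsilon> * s) * exp (- (s\<^sup>2 * ((\<theta>s k)\<^sup>2 + \<epsilon>\<^sup>2)))"
      using s0 by (simp add: field_simps)
    finally have "L k = (2 / sqrt (2 * pi)) * (\<epsilon> * s) * exp (- (s\<^sup>2 * ((\<theta>s k)\<^sup>2 + \<epsilon>\<^sup>2)))" .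
    thus ?thesis unfolding ss by (simp only: s_def)
  qed
  have L0: "L k > 0" if "k \<ge> 1" for k
    unfolding L_eq[OF that] using \<epsilon>0 m0 that by simp
  have lnL: "ln (L k) \<ge> (-1 + ln \<epsilon> + ln m / 2 - m * \<epsilon>\<^sup>2 * P powr (2 * \<alpha>)) + \<alpha> * ln (real k)
      - m * (real k powr (2 * \<alpha>) * (\<theta>s k)\<^sup>2)" if k1: "k \<in> {1..p}" for k
  proof -
    have k: "k \<ge> 1" "k \<le> p" using k1 by auto
    have k0: "real k > 0" using k by simp
    have "ln (L k) = ln (2 / sqrt (2 * pi)) + (ln \<epsilon> + (ln m / 2 + \<alpha> * ln (real k)))
        - m * real k powr (2 * \<alpha>) * ((\<theta>s k)\<^sup>2 + \<epsilon>\<^sup>2)"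
    proof -
      have u0: "2 / sqrt (2 * pi) > 0" by simp
      have w0: "sqrt m * real k powr \<alpha> > 0" using m0 k0 by simp
      have v0: "\<epsilon> * (sqrt m * real k powr \<alpha>) > 0" using \<epsilon>0 w0 by simp
      have "ln (L k) = ln (2 / sqrt (2 * pi)) + ln (\<epsilon> * (sqrt m * real k powr \<alpha>))
          + ln (exp (- (m * real k powr (2 * \<alpha>) * ((\<theta>s k)\<^sup>2 + \<epsilon>\<^sup>2))))"
        unfolding L_eq[OF k(1)] ln_mult_pos[OF mult_pos_pos[OF u0 v0] exp_gt_zero] ln_mult_pos[OF u0 v0] ..
      also have "ln (\<epsilon> * (sqrt m * real k powr \<alpha>)) = ln \<epsilon> + (ln (sqrt m) + ln (real k powr \<alpha>))"
        unfolding ln_mult_pos[OF \<epsilon>0 w0] using m0 k0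
        by (simp add: ln_mult)
      finally show ?thesis using m0 by (simp add: ln_sqrt)
    qed
    moreover have "real k powr (2 * \<alpha>) \<le> P powr (2 * \<alpha>)"
      unfolding P_def using k \<alpha> by (intro powr_mono2) auto
    hence "m * \<epsilon>\<^sup>2 * real k powr (2 * \<alpha>) \<le> m * \<epsilon>\<^sup>2 * P powr (2 * \<alpha>)"
      using m0 by (intro mult_left_mono) auto
    moreover have "m * real k powr (2 * \<alpha>) * ((\<theta>s k)\<^sup>2 + \<epsilon>\<^sup>2)
       = m * (real k powr (2 * \<alpha>) * (\<theta>s k)\<^sup>2) + m * \<epsilon>\<^sup>2 * real k powr (2 * \<alpha>)"
      by (simp add: algebra_simps)
    ultimately show ?thesis using ln_half_bound by linarith
  qed
  define S where "S = (\<Sum>k=1..p. ln (real k))"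
  define A where "A = (\<Sum>k=1..p. real k powr (2 * \<alpha>) * (\<theta>s k)\<^sup>2)"
  have A0: "A \<ge> 0" unfolding A_def by (intro sum_nonneg) simp
  have Ac: "A \<le> c\<^sub>0\<^sup>2"
  proof -
    have "sqrt A \<le> c\<^sub>0" using th unfolding anorm_p_def A_def .
    hence "(sqrt A)\<^sup>2 \<le> c\<^sub>0\<^sup>2" using A0 by (intro power_mono) auto
    thus ?thesis using A0 by simp
  qed
  have SP: "S \<ge> P * ln P - P" unfolding S_def P_def using ln_fact_lb'[OF p] .
  have sumL: "(\<Sum>k=1..p. ln (L k)) \<ge> P * (-1 + ln \<epsilon> + ln m / 2 - m * \<epsilon>\<^sup>2 * P powr (2 * \<alpha>)) + \<alpha> * S - m * A"
  proof -
    have le: "(\<Sum>k=1..p. ln (L k)) \<ge> (\<Sum>k=1..p. (-1 + ln \<epsilon> + ln m / 2 - m * \<epsilon>\<^sup>2 * P powr (2 * \<alpha>)) + \<alpha> * ln (real k)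
      - m * (real k powr (2 * \<alpha>) * (\<theta>s k)\<^sup>2))"
      by (rule sum_mono) (rule lnL)
    have eq: "(\<Sum>k=1..p. (-1 + ln \<epsilon> + ln m / 2 - m * \<epsilon>\<^sup>2 * P powr (2 * \<alpha>)) + \<alpha> * ln (real k)
      - m * (real k powr (2 * \<alpha>) * (\<theta>s k)\<^sup>2))
      = P * (-1 + ln \<epsilon> + ln m / 2 - m * \<epsilon>\<^sup>2 * P powr (2 * \<alpha>)) + \<alpha> * S - m * A"
      unfolding S_def A_def P_def by (simp add: sum.distrib sum_subtractf sum_distrib_left)
    show ?thesis using le eq by linarith
  qed
  have F2: "P * ln m - P * ln P \<le> m - P"
  proof -
    have "ln (m / P) \<le> m / P - 1" using m0 P1 by (intro ln_le_minus_one) simp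
    hence "P * ln (m / P) \<le> P * (m / P - 1)" using P1 by (intro mult_left_mono) auto
    thus ?thesis using m0 P1 by (simp add: ln_div algebra_simps)
  qed
  have F7: "(\<alpha> - 1/2) * (P * ln P - P * ln m) \<ge> (\<alpha> - 1/2) * (P - m)"
    using F2 \<alpha> by (intro mult_left_mono) auto
  have F8: "\<alpha> * S \<ge> \<alpha> * (P * ln P - P)" using SP \<alpha> by (intro mult_left_mono) auto
  have F9: "m * A \<le> m * c\<^sub>0\<^sup>2" using Ac m0 by (intro mult_left_mono) auto
  have F10: "P * (m * \<epsilon>\<^sup>2 * P powr (2 * \<alpha>)) \<le> m * C powr (2 * \<alpha>)"
  proof -
    have "P * (m * \<epsilon>\<^sup>2 * P powr (2 * \<alpha>)) = m * (m powr (- 2 * \<alpha>) * P powr (2 * \<alpha>))"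
      unfolding \<epsilon>2 using P1 by (simp add: field_simps)
    also have "m powr (- 2 * \<alpha>) * P powr (2 * \<alpha>) = (P / m) powr (2 * \<alpha>)"
      by (rule mP)
    also have "(P / m) powr (2 * \<alpha>) \<le> C powr (2 * \<alpha>)"
      using Pm m0 P1 \<alpha> by (intro powr_mono2) auto
    finally show ?thesis using m0 by (simp add: mult_left_mono)
  qed
  have F11: "\<alpha> * P \<le> \<alpha> * C * m" using pm \<alpha> by (simp add: mult.assoc mult_left_mono)
  have F12: "(\<alpha> - 1/2) * (P - m) \<ge> - \<alpha> * m"
  proof -
    have "(\<alpha> - 1/2) * P \<ge> 0" using \<alpha> P1 by simp
    moreover have "(\<alpha> - 1/2) * (P - m) = (\<alpha> - 1/2) * P - \<alpha> * m + m / 2"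
      by (simp add: field_simps)
    ultimately show ?thesis using m0 by linarith
  qed
  have expand: "P * (-1 + ln \<epsilon> + ln m / 2 - m * \<epsilon>\<^sup>2 * P powr (2 * \<alpha>)) + \<alpha> * S - m * A
      = - P + (\<alpha> - 1/2) * (P * ln P - P * ln m) - \<alpha> * (P * ln P - P) - \<alpha> * P
        - P * (m * \<epsilon>\<^sup>2 * P powr (2 * \<alpha>)) + \<alpha> * S - m * A"
    unfolding ln\<epsilon> by (simp add: algebra_simps)
  define c where "c = C + \<alpha> + \<alpha> * C + c\<^sub>0\<^sup>2 + C powr (2 * \<alpha>)"
  have sumL2: "(\<Sum>k=1..p. ln (L k)) \<ge> - c * m"
  proof -
    have "- c * m = - C * m - \<alpha> * m - \<alpha> * C * m - m * c\<^sub>0\<^sup>2 - m * C powr (2 * \<alpha>)"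
      unfolding c_def by (simp add: algebra_simps)
    thus ?thesis using sumL expand F7 F8 F9 F10 F11 F12 pm by linarith
  qed
  have prodL: "(\<Prod>k=1..p. L k) \<ge> exp (- c * m)"
  proof -
    have "(\<Prod>k=1..p. L k) = (\<Prod>k=1..p. exp (ln (L k)))"
      by (intro prod.cong) (auto simp: L0)
    also have "\<dots> = exp (\<Sum>k=1..p. ln (L k))" by (simp add: exp_sum)
    finally show ?thesis using sumL2 by simp
  qed
  define B where "B = PiE {1..p} (\<lambda>k. {\<theta>s k - \<epsilon> .. \<theta>s k + \<epsilon>})"
  have sp: "space (prior \<alpha> n p) = PiE {1..p} (\<lambda>_. UNIV)"
    unfolding prior_eq by (simp add: space_PiM)
  have Bsub: "B \<subseteq> ballB \<alpha> n p \<theta>s r"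
  proof
    fix \<theta> assume \<theta>: "\<theta> \<in> B"
    have d: "\<bar>\<theta> k - \<theta>s k\<bar> \<le> \<epsilon>" if "k \<in> {1..p}" for k
    proof -
      have "\<theta>s k - \<epsilon> \<le> \<theta> k \<and> \<theta> k \<le> \<theta>s k + \<epsilon>"
        using \<theta> that unfolding B_def by (auto simp: PiE_iff)
      thus ?thesis unfolding abs_le_iff by linarith
    qed
    have d2: "(\<theta> k - \<theta>s k)\<^sup>2 \<le> \<epsilon>\<^sup>2" if "k \<in> {1..p}" for k
      using d[OF that] by (metis abs_ge_zero abs_le_square_iff abs_of_nonneg order_trans \<epsilon>0 less_imp_le abs_of_pos)
    have "\<theta> \<in> space (prior \<alpha> n p)" using \<theta> unfolding sp B_def by (auto simp: PiE_iff)
    moreover have "enorm_p p (\<lambda>k. \<theta> k - \<theta>s k) \<le> \<delta>"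
    proof -
      have "(\<Sum>k=1..p. (\<theta> k - \<theta>s k)\<^sup>2) \<le> (\<Sum>k=1..p. \<epsilon>\<^sup>2)" by (rule sum_mono) (rule d2)
      also have "\<dots> = \<delta>\<^sup>2" unfolding \<epsilon>_def using P1 by (simp add: P_def power_divide)
      finally have "sqrt (\<Sum>k=1..p. (\<theta> k - \<theta>s k)\<^sup>2) \<le> sqrt (\<delta>\<^sup>2)" by (rule real_sqrt_le_mono)
      thus ?thesis unfolding enorm_p_def using \<delta>0 by simp
    qed
    moreover have "anorm_p \<alpha> p \<theta> \<le> r"
    proof -
      have pt: "real k powr (2 * \<alpha>) * (\<theta> k)\<^sup>2 \<le> 2 * (real k powr (2 * \<alpha>) * (\<theta>s k)\<^sup>2)
          + 2 * \<epsilon>\<^sup>2 * P powr (2 * \<alpha>)" if k: "k \<in> {1..p}" for k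
      proof -
        have "\<bar>\<theta> k\<bar> \<le> \<bar>\<theta>s k\<bar> + \<epsilon>" using d[OF k] by linarith
        hence "(\<theta> k)\<^sup>2 \<le> 2 * ((\<theta>s k)\<^sup>2 + \<epsilon>\<^sup>2)" using \<epsilon>0 by (intro sq_bound) auto
        hence "real k powr (2 * \<alpha>) * (\<theta> k)\<^sup>2 \<le> real k powr (2 * \<alpha>) * (2 * ((\<theta>s k)\<^sup>2 + \<epsilon>\<^sup>2))"
          by (intro mult_left_mono) auto
        moreover have "real k powr (2 * \<alpha>) \<le> P powr (2 * \<alpha>)"
          unfolding P_def using k \<alpha> by (intro powr_mono2) auto
        hence "2 * \<epsilon>\<^sup>2 * real k powr (2 * \<alpha>) \<le> 2 * \<epsilon>\<^sup>2 * P powr (2 * \<alpha>)"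
          by (intro mult_left_mono) auto
        ultimately show ?thesis by (simp add: algebra_simps)
      qed
      have "(\<Sum>k=1..p. real k powr (2 * \<alpha>) * (\<theta> k)\<^sup>2)
          \<le> (\<Sum>k=1..p. 2 * (real k powr (2 * \<alpha>) * (\<theta>s k)\<^sup>2) + 2 * \<epsilon>\<^sup>2 * P powr (2 * \<alpha>))"
        by (rule sum_mono) (rule pt)
      also have "\<dots> = 2 * A + 2 * (P * (\<epsilon>\<^sup>2 * P powr (2 * \<alpha>)))"
        unfolding A_def P_def by (simp add: sum.distrib sum_distrib_left)
      also have "P * (\<epsilon>\<^sup>2 * P powr (2 * \<alpha>)) = (P / m) powr (2 * \<alpha>)"
        unfolding \<epsilon>2 mP[symmetric] using P1 m0 by simp
      also have "(P / m) powr (2 * \<alpha>) \<le> C powr (2 * \<alpha>)"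
        using Pm m0 P1 \<alpha> by (intro powr_mono2) auto
      finally have "(\<Sum>k=1..p. real k powr (2 * \<alpha>) * (\<theta> k)\<^sup>2) \<le> 2 * c\<^sub>0\<^sup>2 + 2 * C powr (2 * \<alpha>)"
        using Ac by linarith
      also have "\<dots> \<le> r\<^sup>2"
      proof -
        have Ca: "C powr (2 * \<alpha>) = (C powr \<alpha>)\<^sup>2" using C
          by (simp add: power2_eq_square powr_add[symmetric])
        have Cp: "C powr \<alpha> \<ge> 0" by simp
        have "(2 * c\<^sub>0 + 2 * C powr \<alpha>)\<^sup>2 \<le> r\<^sup>2" using r c0 Cp by (intro power_mono) auto
        moreover have "(2 * c\<^sub>0 + 2 * C powr \<alpha>)\<^sup>2 = 4 * c\<^sub>0\<^sup>2 + 8 * c\<^sub>0 * C powr \<alpha> + 4 * (C powr \<alpha>)\<^sup>2"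
          by (simp add: power2_eq_square algebra_simps)
        moreover have "8 * c\<^sub>0 * C powr \<alpha> \<ge> 0" using c0 Cp by simp
        moreover have "c\<^sub>0\<^sup>2 \<ge> 0" "(C powr \<alpha>)\<^sup>2 \<ge> 0" by simp_all
        ultimately show ?thesis unfolding Ca by linarith
      qed
      finally have "sqrt (\<Sum>k=1..p. real k powr (2 * \<alpha>) * (\<theta> k)\<^sup>2) \<le> sqrt (r\<^sup>2)" by (rule real_sqrt_le_mono)
      moreover have "C powr \<alpha> \<ge> 0" by simp
      ultimately show ?thesis unfolding anorm_p_def using r c0 by simp
    qed
    ultimately show "\<theta> \<in> ballB \<alpha> n p \<theta>s r" unfolding ballB_def \<delta>_def by simp
  qed
  have PS: "prob_space (prior \<alpha> n p)"
    unfolding prior_eq by (auto intro!: prob_space_PiM prob_space_normal_density \<sigma>0)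
  have "ennreal (exp (- c * m)) \<le> ennreal (\<Prod>k=1..p. L k)"
    using prodL by (simp add: ennreal_leI)
  also have "\<dots> = (\<Prod>k=1..p. ennreal (L k))"
    using L0 by (intro prod_ennreal[symmetric]) (auto intro: less_imp_le)
  also have "\<dots> \<le> (\<Prod>k=1..p. emeasure (density lborel (normal_density 0 (\<sigma> k))) {\<theta>s k - \<epsilon> .. \<theta>s k + \<epsilon>})"
    unfolding L_def using \<sigma>0 \<epsilon>0 by (intro prod_mono_ennreal factor_lb) auto
  also have "\<dots> = emeasure (prior \<alpha> n p) B"
    unfolding prior_eq B_def by (rule box_measure[symmetric]) (auto intro: \<sigma>0)
  also have "\<dots> \<le> emeasure (prior \<alpha> n p) (ballB \<alpha> n p \<theta>s r)"
    by (rule emeasure_mono[OF Bsub ballB_meas])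
  also have "\<dots> = ennreal (measure (prior \<alpha> n p) (ballB \<alpha> n p \<theta>s r))"
    by (rule finite_measure.emeasure_eq_measure[OF prob_space.finite_measure[OF PS]])
  finally have fin: "exp (- c * m) \<le> measure (prior \<alpha> n p) (ballB \<alpha> n p \<theta>s r)"
    by (subst (asm) ennreal_le_iff) auto
  have eqm: "- c * real n * (rate \<alpha> n)\<^sup>2 = - c * m"
    using n\<delta> unfolding \<delta>_def by (simp add: mult.assoc)
  have "exp (- c * real n * (rate \<alpha> n)\<^sup>2) \<le> measure (prior \<alpha> n p) (ballB \<alpha> n p \<theta>s r)"
    using fin by (simp only: eqm)
  thus ?thesis unfolding c_def .
qed

theorem lemma6p11:
  fixes \<alpha> c\<^sub>0 C :: real
  assumes "\<alpha> > 1/2" and "c\<^sub>0 > 0" and "C > 0"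
  shows "\<exists>r\<^sub>0 \<ge> max 4 (2 * c\<^sub>0). \<forall>r \<ge> r\<^sub>0. \<exists>c > 0.
           \<forall>(n::nat) (p::nat) (\<theta>s :: nat \<Rightarrow> real).
             n \<ge> 1 \<longrightarrow> p \<ge> 1 \<longrightarrow> real p \<le> C * real n * (rate \<alpha> n)\<^sup>2 \<longrightarrow>
             anorm_p \<alpha> p \<theta>s \<le> c\<^sub>0 \<longrightarrow>
             measure (prior \<alpha> n p) (ballB \<alpha> n p \<theta>s r) \<ge> exp (- c * real n * (rate \<alpha> n)\<^sup>2)"
proof (rule exI[of _ "4 + 2 * c\<^sub>0 + 2 * C powr \<alpha>"], intro conjI allI impI)
  have "C powr \<alpha> \<ge> 0" by simp
  thus "4 + 2 * c\<^sub>0 + 2 * C powr \<alpha> \<ge> max 4 (2 * c\<^sub>0)" using assms by simp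
  fix r assume r: "r \<ge> 4 + 2 * c\<^sub>0 + 2 * C powr \<alpha>"
  have cpos: "C + \<alpha> + \<alpha> * C + c\<^sub>0\<^sup>2 + C powr (2 * \<alpha>) > 0"
    using assms by (simp add: add_pos_nonneg)
  show "\<exists>c > 0. \<forall>(n::nat) (p::nat) (\<theta>s :: nat \<Rightarrow> real).
             n \<ge> 1 \<longrightarrow> p \<ge> 1 \<longrightarrow> real p \<le> C * real n * (rate \<alpha> n)\<^sup>2 \<longrightarrow>
             anorm_p \<alpha> p \<theta>s \<le> c\<^sub>0 \<longrightarrow>
             measure (prior \<alpha> n p) (ballB \<alpha> n p \<theta>s r) \<ge> exp (- c * real n * (rate \<alpha> n)\<^sup>2)"
    using key_main[OF assms r] cpos by blast
qed

end
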